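(* For all integers $m \geq 0$ and $n \geq 1$, \[ \sum_{k=0}^{n-1}\binom{m+k}{m}\binom{-n}{k}\binom{-n}{n-1-k} = \sum_{k=0}^{m}\binom{m}{k}\binom{-n}{k}\binom{-2n-k}{n-1-k}. \]
   Context: For a complex number $\alpha$ and an integer $k \geq 0$, $\binom{\alpha}{k} = \frac{\alpha(\alpha-1)\cdots(\alpha-k+1)}{k!}$ (equal to $1$ for $k=0$), and $\binom{\alpha}{k} = 0$ for integers $k < 0$. *)

theory Defs
  imports Complex_Main
begin

definition gbinom :: "real \<Rightarrow> int \<Rightarrow> real" where
  "gbinom a k = (if k < 0 then 0 else a gchoose (nat k))"

end

theory Submission
  imports Defs "HOL-Computational_Algebra.Formal_Power_Series"
begin

lemma inner_sum:
  fixes a :: real and N j :: nat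
  shows "(\<Sum>k = 0..N. real (k choose j) * (a gchoose k) * (a gchoose (N - k)))
       = (if j \<le> N then (a gchoose j) * ((2 * a - real j) gchoose (N - j)) else 0)"
proof (cases "j \<le> N")
  case False
  then show ?thesis by (auto intro!: sum.neutral simp: binomial_eq_0)
next
  case True
  have "(\<Sum>k = 0..N. real (k choose j) * (a gchoose k) * (a gchoose (N - k)))
      = (\<Sum>k = j..N. real (k choose j) * (a gchoose k) * (a gchoose (N - k)))"
    using True by (intro sum.mono_neutral_right) (auto simp: binomial_eq_0)
  also have "\<dots> = (\<Sum>k = j..N. (a gchoose j) * ((a - real j) gchoose (k - j)) * (a gchoose (N - k)))"
  proof (intro sum.cong refl)
    fix k assume "k \<in> {j..N}"
    then have "j \<le> k" by auto
    from gbinomial_trinomial_revision[OF this, of a]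
    show "real (k choose j) * (a gchoose k) * (a gchoose (N - k)) =
          (a gchoose j) * ((a - real j) gchoose (k - j)) * (a gchoose (N - k))"
      by (simp add: binomial_gbinomial mult_ac)
  qed
  also have "\<dots> = (\<Sum>i = 0..N - j. (a gchoose j) * ((a - real j) gchoose i) * (a gchoose (N - j - i)))"
    using True
    by (rule_tac sum.reindex_bij_witness[where i="\<lambda>k. k + j" and j="\<lambda>k. k - j"]) auto
  also have "\<dots> = (a gchoose j) * (\<Sum>i = 0..N - j. ((a - real j) gchoose i) * (a gchoose (N - j - i)))"
    by (simp add: sum_distrib_left mult_ac)
  also have "\<dots> = (a gchoose j) * ((2 * a - real j) gchoose (N - j))"
    by (subst gbinomial_Vandermonde) (simp add: algebra_simps)
  finally show ?thesis using True by simp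
qed

lemma gbinom_nat: "gbinom a (int k) = a gchoose k"
  by (simp add: gbinom_def)

theorem lemma5:
  fixes m n :: nat
  assumes "n \<ge> 1"
  shows "(\<Sum>k = 0..n - 1. gbinom (real (m + k)) (int m) * gbinom (- real n) (int k)
            * gbinom (- real n) (int n - 1 - int k))
       = (\<Sum>k = 0..m. gbinom (real m) (int k) * gbinom (- real n) (int k)
            * gbinom (- 2 * real n - real k) (int n - 1 - int k))"
proof -
  define N where "N = n - 1"
  define a :: real where "a = - real n"
  have nN: "int n - 1 = int N" using assms N_def by simp
  have L: "(\<Sum>k = 0..n - 1. gbinom (real (m + k)) (int m) * gbinom (- real n) (int k)
            * gbinom (- real n) (int n - 1 - int k))
      = (\<Sum>k = 0..N. real ((m + k) choose m) * (a gchoose k) * (a gchoose (N - k)))"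
    unfolding N_def[symmetric]
  proof (intro sum.cong refl)
    fix k assume "k \<in> {0..N}"
    then have e: "int n - 1 - int k = int (N - k)" using nN by auto
    have c: "gbinom (real (m + k)) (int m) = real ((m + k) choose m)"
      by (metis gbinom_nat binomial_gbinomial)
    show "gbinom (real (m + k)) (int m) * gbinom (- real n) (int k) * gbinom (- real n) (int n - 1 - int k)
       = real ((m + k) choose m) * (a gchoose k) * (a gchoose (N - k))"
      unfolding e gbinom_nat a_def binomial_gbinomial by (rule refl)
  qed
  have R: "(\<Sum>k = 0..m. gbinom (real m) (int k) * gbinom (- real n) (int k)
            * gbinom (- 2 * real n - real k) (int n - 1 - int k))
      = (\<Sum>j = 0..m. real (m choose j) * (if j \<le> N then (a gchoose j) * ((2 * a - real j) gchoose (N - j)) else 0))"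
  proof (intro sum.cong refl)
    fix j assume "j \<in> {0..m}"
    show "gbinom (real m) (int j) * gbinom (- real n) (int j) * gbinom (- 2 * real n - real j) (int n - 1 - int j)
      = real (m choose j) * (if j \<le> N then (a gchoose j) * ((2 * a - real j) gchoose (N - j)) else 0)"
    proof (cases "j \<le> N")
      case True
      then have e: "int n - 1 - int j = int (N - j)" using nN by auto
      have c: "gbinom (real m) (int j) = real (m choose j)"
        by (metis gbinom_nat binomial_gbinomial)
      have d: "- 2 * real n - real j = 2 * a - real j" by (simp add: a_def)
      show ?thesis
        unfolding e d gbinom_nat binomial_gbinomial if_P[OF True] a_def by (rule mult.assoc)
    next
      case False
      then show ?thesis by (simp add: gbinom_def nN)
    qed
  qed
  have V: "real ((m + k) choose m) = (\<Sum>j = 0..m. real (m choose j) * real (k choose j))" for k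
  proof -
    have "(\<Sum>j\<le>m. (k choose j) * (m choose (m - j))) = (k + m) choose m"
      by (rule vandermonde)
    moreover have "(\<Sum>j\<le>m. (k choose j) * (m choose (m - j))) = (\<Sum>j = 0..m. (m choose j) * (k choose j))"
      by (intro sum.cong) (auto simp: binomial_symmetric[symmetric])
    ultimately have "(m + k) choose m = (\<Sum>j = 0..m. (m choose j) * (k choose j))"
      by (simp add: add.commute)
    then show ?thesis by (simp only: of_nat_sum of_nat_mult)
  qed
  have "(\<Sum>k = 0..N. real ((m + k) choose m) * (a gchoose k) * (a gchoose (N - k)))
      = (\<Sum>k = 0..N. \<Sum>j = 0..m. real (m choose j) * (real (k choose j) * (a gchoose k) * (a gchoose (N - k))))"
    unfolding V sum_distrib_right by (intro sum.cong refl) (simp add: mult_ac)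
  also have "\<dots> = (\<Sum>j = 0..m. \<Sum>k = 0..N. real (m choose j) * (real (k choose j) * (a gchoose k) * (a gchoose (N - k))))"
    by (rule sum.swap)
  also have "\<dots> = (\<Sum>j = 0..m. real (m choose j) * (if j \<le> N then (a gchoose j) * ((2 * a - real j) gchoose (N - j)) else 0))"
    by (simp add: sum_distrib_left[symmetric] inner_sum del: of_nat_sum)
  finally show ?thesis using L R by simp
qed

end
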